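(* Given an NC-spectrum graph $G=(V,E)$ with nodes $x_0,\dots,x_k,y_k,\dots,y_0$, Algorithm Compute-M (described in the context) computes the table $M$ (defined in the context) in $O(|V|^2)$ time.
   Context: Fix a finite set $\mathcal{R}$ of positive reals (the amino acid masses). A real $m$ is an amino-acid mass sum if $m=r_1+\cdots+r_t$ for some $t\ge1$, $r_i\in\mathcal{R}$ (repetitions allowed). Given a peptide mass $W$ and $k$ ion masses $w_1,\dots,w_k$, the NC-spectrum graph $G=(V,E)$ has vertex set $V=\{N_0,\dots,N_k,C_0,\dots,C_k\}$ ($|V|=2k+2$) with coordinates $\mathrm{cord}(N_0)=0$, $\mathrm{cord}(C_0)=W-18$, $\mathrm{cord}(N_j)=w_j-1$, $\mathrm{cord}(C_j)=W-w_j$ ($1\le j\le k$); for $j\ge1$, $N_j,C_j$ are derived from the $j$-th ion. There is an edge from $u$ to $v$ ($E(u,v)=1$, else $E(u,v)=0$) iff $u,v$ are not derived from the same ion, $\mathrm{cord}(u)<\mathrm{cord}(v)$, and $\mathrm{cord}(v)-\mathrm{cord}(u)$ is an amino-acid mass sum. The nodes are listed in increasing coordinate order as $x_0,x_1,\dots,x_k,y_k,\dots,y_1,y_0$, with $x_0=N_0$, $y_0=C_0$ and $\{x_j,y_j\}$ the pair derived from one ion ($j\ge1$); every edge goes from a node to a later node in this list; edge queries take $O(1)$ time. The table $M$: for $0\le i,j\le k$, $M(i,j)=1$ if there exist a directed path $L$ from $x_0$ to $x_i$ and a directed path $R$ from $y_j$ to $y_0$ (a path may be a single node) such that $L\cup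 R$ contains exactly one of $x_p$ and $y_p$ for every $1\le p\le\max(i,j)$, and $M(i,j)=0$ otherwise. Algorithm Compute-M: (1) set $M(0,0)=1$ and $M(i,j)=0$ for all other $(i,j)$; (2) compute $M(1,0)$ and $M(0,1)$ (directly from the definition); (3) for $j=2$ to $k$: (4) for $i=0$ to $j-2$: (a) if $M(i,j-1)=1$ and $E(x_i,x_j)=1$, set $M(j,j-1)=1$; (b) if $M(i,j-1)=1$ and $E(y_j,y_{j-1})=1$, set $M(i,j)=1$; (c) if $M(j-1,i)=1$ and $E(x_{j-1},x_j)=1$, set $M(j,i)=1$; (d) if $M(j-1,i)=1$ and $E(y_j,y_i)=1$, set $M(j-1,j)=1$. *)

theory Defs
  imports Complex_Main
begin

text \<open>Vertices: N j and C j; for j \<ge> 1 both are derived from the j-th ion.\<close>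
datatype ncnode = N nat | C nat

fun ion :: "ncnode \<Rightarrow> nat" where
  "ion (N j) = j" | "ion (C j) = j"

definition ncV :: "nat \<Rightarrow> ncnode set" where
  "ncV k = {N j | j. j \<le> k} \<union> {C j | j. j \<le> k}"

fun cord :: "real \<Rightarrow> (nat \<Rightarrow> real) \<Rightarrow> ncnode \<Rightarrow> real" where
  "cord W w (N j) = (if j = 0 then 0 else w j - 1)"
| "cord W w (C j) = (if j = 0 then W - 18 else W - w j)"

definition aa_mass_sum :: "real set \<Rightarrow> real \<Rightarrow> bool" where
  "aa_mass_sum R m \<longleftrightarrow> (\<exists>rs. rs \<noteq> [] \<and> set rs \<subseteq> R \<and> sum_list rs = m)"

text \<open>u and v are derived from the same ion (only ions j \<ge> 1 exist).\<close>
definition same_ion :: "ncnode \<Rightarrow> ncnode \<Rightarrow> bool" where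
  "same_ion u v \<longleftrightarrow> ion u = ion v \<and> ion u \<ge> 1"

definition ncE :: "real set \<Rightarrow> real \<Rightarrow> (nat \<Rightarrow> real) \<Rightarrow> nat \<Rightarrow> ncnode \<Rightarrow> ncnode \<Rightarrow> bool" where
  "ncE R W w k u v \<longleftrightarrow> u \<in> ncV k \<and> v \<in> ncV k \<and> \<not> same_ion u v
     \<and> cord W w u < cord W w v \<and> aa_mass_sum R (cord W w v - cord W w u)"

text \<open>The standing assumptions: R a finite set of positive reals, and the nodes of V listed
  in increasing coordinate order as x_0,...,x_k,y_k,...,y_0 with x_0 = N_0, y_0 = C_0 and
  {x_j, y_j} the pair derived from one ion (j \<ge> 1).\<close>
definition NC_listing ::
  "real set \<Rightarrow> real \<Rightarrow> (nat \<Rightarrow> real) \<Rightarrow> nat \<Rightarrow> (nat \<Rightarrow> ncnode) \<Rightarrow> (nat \<Rightarrow> ncnode) \<Rightarrow> bool" where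
  "NC_listing R W w k xs ys \<longleftrightarrow>
     finite R \<and> (\<forall>r\<in>R. r > 0) \<and>
     xs 0 = N 0 \<and> ys 0 = C 0 \<and>
     (\<forall>j\<in>{1..k}. \<exists>p\<in>{1..k}. {xs j, ys j} = {N p, C p}) \<and>
     set (map xs [0..<Suc k] @ rev (map ys [0..<Suc k])) = ncV k \<and>
     sorted_wrt (\<lambda>u v. cord W w u < cord W w v) (map xs [0..<Suc k] @ rev (map ys [0..<Suc k]))"

definition is_path :: "('v \<Rightarrow> 'v \<Rightarrow> bool) \<Rightarrow> 'v \<Rightarrow> 'v \<Rightarrow> 'v list \<Rightarrow> bool" where
  "is_path E u v p \<longleftrightarrow> p \<noteq> [] \<and> hd p = u \<and> last p = v \<and> successively E p"

definition Mtab :: "('v \<Rightarrow> 'v \<Rightarrow> bool) \<Rightarrow> (nat \<Rightarrow> 'v) \<Rightarrow> (nat \<Rightarrow> 'v) \<Rightarrow> nat \<Rightarrow> nat \<Rightarrow> bool" where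
  "Mtab E xs ys i j \<longleftrightarrow> (\<exists>L Rp. is_path E (xs 0) (xs i) L \<and> is_path E (ys j) (ys 0) Rp \<and>
      (\<forall>p\<in>{1..max i j}. (xs p \<in> set L \<union> set Rp) \<noteq> (ys p \<in> set L \<union> set Rp)))"

text \<open>State: table (nat \<Rightarrow> nat \<Rightarrow> bool) and number of elementary O(1) operations performed.
  Each edge query / table access / assignment is charged one unit.\<close>

definition set1 :: "(nat \<Rightarrow> nat \<Rightarrow> bool) \<Rightarrow> nat \<Rightarrow> nat \<Rightarrow> nat \<Rightarrow> nat \<Rightarrow> bool" where
  "set1 M a b = M(a := (M a)(b := True))"

definition inner_step :: "('v \<Rightarrow> 'v \<Rightarrow> bool) \<Rightarrow> (nat \<Rightarrow> 'v) \<Rightarrow> (nat \<Rightarrow> 'v) \<Rightarrow> nat \<Rightarrow> nat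
    \<Rightarrow> (nat \<Rightarrow> nat \<Rightarrow> bool) \<times> nat \<Rightarrow> (nat \<Rightarrow> nat \<Rightarrow> bool) \<times> nat" where
  "inner_step E xs ys j i st = (case st of (M0, c) \<Rightarrow>
     let Ma = (if M0 i (j-1) \<and> E (xs i) (xs j) then set1 M0 j (j-1) else M0);
         Mb = (if Ma i (j-1) \<and> E (ys j) (ys (j-1)) then set1 Ma i j else Ma);
         Mc = (if Mb (j-1) i \<and> E (xs (j-1)) (xs j) then set1 Mb j i else Mb);
         Md = (if Mc (j-1) i \<and> E (ys j) (ys i) then set1 Mc (j-1) j else Mc)
     in (Md, c + 12))"

definition outer_step :: "('v \<Rightarrow> 'v \<Rightarrow> bool) \<Rightarrow> (nat \<Rightarrow> 'v) \<Rightarrow> (nat \<Rightarrow> 'v) \<Rightarrow> nat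
    \<Rightarrow> (nat \<Rightarrow> nat \<Rightarrow> bool) \<times> nat \<Rightarrow> (nat \<Rightarrow> nat \<Rightarrow> bool) \<times> nat" where
  "outer_step E xs ys j st =
     fold (inner_step E xs ys j) [0..<j-1] (case st of (M, c) \<Rightarrow> (M, c + 1))"

definition compute_M :: "('v \<Rightarrow> 'v \<Rightarrow> bool) \<Rightarrow> (nat \<Rightarrow> 'v) \<Rightarrow> (nat \<Rightarrow> 'v) \<Rightarrow> nat
    \<Rightarrow> (nat \<Rightarrow> nat \<Rightarrow> bool) \<times> nat" where
  "compute_M E xs ys k =
     (let M1 = (\<lambda>i j. i = 0 \<and> j = 0);          \<comment> \<open>step (1): (k+1)^2 assignments\<close>
          M2 = (M1(1 := (M1 1)(0 := E (xs 0) (xs 1))));   \<comment> \<open>step (2): M(1,0)\<close>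
          M3 = (M2(0 := (M2 0)(1 := E (ys 1) (ys 0))));   \<comment> \<open>step (2): M(0,1)\<close>
          c3 = (Suc k)^2 + 4
      in fold (outer_step E xs ys) [2..<Suc k] (M3, c3))"

end

theory Submission imports Defs begin

lemma succ_mono_f:
  assumes "successively E p" "\<And>a b. E a b \<Longrightarrow> f a < (f b::real)"
  shows "sorted_wrt (\<lambda>a b. f a < f b) p"
proof -
  have "successively (\<lambda>a b. f a < f b) p" using assms(1) by (rule successively_mono) (use assms(2) in auto)
  moreover have "transp (\<lambda>a b. f a < (f b::real))" by (auto simp: transp_def)
  ultimately show ?thesis using successively_conv_sorted_wrt by blast
qed

lemma succ_in_S:
  assumes "successively E p" "\<And>a b. E a b \<Longrightarrow> a \<in> S \<and> b \<in> S"
  shows "set p \<subseteq> S \<union> {hd p}"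
  using assms(1)
proof (induction p)
  case Nil then show ?case by simp
next
  case (Cons a p)
  show ?case
  proof (cases p)
    case Nil then show ?thesis by simp
  next
    case (Cons b q)
    with Cons.prems have "E a b" "successively E p" by auto
    with Cons.IH assms(2) \<open>p = b # q\<close> show ?thesis by auto
  qed
qed

lemma path_snoc:
  assumes "is_path E u v L" "u \<noteq> v"
  shows "\<exists>L'. L = L' @ [v] \<and> L' \<noteq> [] \<and> is_path E u (last L') L' \<and> E (last L') v"
proof -
  have ne: "L \<noteq> []" and h: "hd L = u" and l: "last L = v" and s: "successively E L"
    using assms(1) by (auto simp: is_path_def)
  define L' where "L' = butlast L"
  have eq: "L = L' @ [v]" using ne l append_butlast_last_id[of L] by (simp add: L'_def)
  have ne': "L' \<noteq> []" using eq h assms(2) by auto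
  have "hd L' = u" using eq ne' h by simp
  moreover have "successively E L'" "E (last L') v" using s eq ne' by (auto simp: successively_append_iff)
  ultimately show ?thesis using eq ne' by (auto simp: is_path_def)
qed

lemma path_snoc_intro:
  assumes "is_path E u w L" "E w v"
  shows "is_path E u v (L @ [v])"
  using assms by (auto simp: is_path_def successively_append_iff)

lemma is_path_rev: "is_path E u v p = is_path (\<lambda>a b. E b a) v u (rev p)"
  by (auto simp: is_path_def hd_rev last_rev)

lemma Mtab_mirror: "Mtab E xs ys i j = Mtab (\<lambda>a b. E b a) ys xs j i"
proof
  assume "Mtab E xs ys i j"
  then obtain L R where "is_path E (xs 0) (xs i) L" "is_path E (ys j) (ys 0) R"
    "\<forall>p\<in>{1..max i j}. (xs p \<in> set L \<union> set R) \<noteq> (ys p \<in> set L \<union> set R)"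
    unfolding Mtab_def by blast
  then show "Mtab (\<lambda>a b. E b a) ys xs j i" unfolding Mtab_def
    by (intro exI[of _ "rev R"] exI[of _ "rev L"]) (auto simp: is_path_rev[of E] max.commute)
next
  assume "Mtab (\<lambda>a b. E b a) ys xs j i"
  then obtain L R where "is_path (\<lambda>a b. E b a) (ys 0) (ys j) L" "is_path (\<lambda>a b. E b a) (xs i) (xs 0) R"
    "\<forall>p\<in>{1..max j i}. (ys p \<in> set L \<union> set R) \<noteq> (xs p \<in> set L \<union> set R)"
    unfolding Mtab_def by blast
  then show "Mtab E xs ys i j" unfolding Mtab_def
    by (intro exI[of _ "rev R"] exI[of _ "rev L"]) (auto simp: is_path_rev[of E] max.commute)
qed

locale ncl =
  fixes E :: "'v \<Rightarrow> 'v \<Rightarrow> bool" and xs ys :: "nat \<Rightarrow> 'v" and f :: "'v \<Rightarrow> real" and k :: nat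
  assumes edge: "E u v \<Longrightarrow> u \<in> xs ` {..k} \<union> ys ` {..k} \<and> v \<in> xs ` {..k} \<union> ys ` {..k} \<and> f u < f v"
    and xmono: "p < q \<Longrightarrow> q \<le> k \<Longrightarrow> f (xs p) < f (xs q)"
    and ymono: "p < q \<Longrightarrow> q \<le> k \<Longrightarrow> f (ys q) < f (ys p)"
    and mid: "f (xs k) < f (ys k)"
begin

lemma mirror: "ncl (\<lambda>a b. E b a) ys xs (\<lambda>v. - f v) k"
proof
  fix u v assume "E v u"
  then show "u \<in> ys ` {..k} \<union> xs ` {..k} \<and> v \<in> ys ` {..k} \<union> xs ` {..k} \<and> - f u < - f v"
    using edge[of v u] by auto
next
  fix p q :: nat assume "p < q" "q \<le> k"
  then show "- f (ys p) < - f (ys q)" using ymono by simp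
next
  fix p q :: nat assume "p < q" "q \<le> k"
  then show "- f (xs q) < - f (xs p)" using xmono by simp
next
  show "- f (ys k) < - f (xs k)" using mid by simp
qed

lemma xle: "p \<le> q \<Longrightarrow> q \<le> k \<Longrightarrow> f (xs p) \<le> f (xs q)"
  using xmono by (cases "p = q") (auto intro: less_imp_le)

lemma yle: "p \<le> q \<Longrightarrow> q \<le> k \<Longrightarrow> f (ys q) \<le> f (ys p)"
  using ymono by (cases "p = q") (auto intro: less_imp_le)

lemma xy: "p \<le> k \<Longrightarrow> q \<le> k \<Longrightarrow> f (xs p) < f (ys q)"
  using xle[of p k] yle[of q k] mid by linarith

lemma xy_ne: "p \<le> k \<Longrightarrow> q \<le> k \<Longrightarrow> xs p \<noteq> ys q"
  using xy by fastforce

lemma x_inj: "p \<le> k \<Longrightarrow> q \<le> k \<Longrightarrow> xs p = xs q \<longleftrightarrow> p = q"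
  using xmono[of p q] xmono[of q p] by (cases p q rule: linorder_cases) auto

lemma y_inj: "p \<le> k \<Longrightarrow> q \<le> k \<Longrightarrow> ys p = ys q \<longleftrightarrow> p = q"
  using ymono[of p q] ymono[of q p] by (cases p q rule: linorder_cases) auto

lemma path_x:
  assumes "is_path E (xs 0) (xs i) L" "i \<le> k"
  shows "set L \<subseteq> xs ` {..i}"
proof
  fix z assume z: "z \<in> set L"
  have s: "successively E L" and hl: "hd L = xs 0" "last L = xs i" and ne: "L \<noteq> []"
    using assms by (auto simp: is_path_def)
  have "set L \<subseteq> (xs ` {..k} \<union> ys ` {..k}) \<union> {hd L}"
    by (rule succ_in_S[OF s]) (use edge in blast)
  with z hl have zS: "z \<in> xs ` {..k} \<union> ys ` {..k}" by auto
  have sw: "sorted_wrt (\<lambda>a b. f a < f b) L" by (rule succ_mono_f[OF s]) (use edge in blast)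
  have "f z \<le> f (last L)"
  proof (cases "z = last L")
    case False
    from z ne obtain L1 L2 where "L = L1 @ z # L2" by (meson split_list)
    with False have "L2 \<noteq> []" by auto
    then have "last L \<in> set L2" using \<open>L = L1 @ z # L2\<close> by simp
    with sw \<open>L = L1 @ z # L2\<close> show ?thesis by (auto simp: sorted_wrt_append)
  qed simp
  with hl have fz: "f z \<le> f (xs i)" by simp
  from zS show "z \<in> xs ` {..i}"
  proof
    assume "z \<in> xs ` {..k}"
    then obtain p where "p \<le> k" "z = xs p" by auto
    with fz xmono[of i p] show ?thesis by (cases "p \<le> i") auto
  next
    assume "z \<in> ys ` {..k}"
    then obtain p where "p \<le> k" "z = ys p" by auto
    with fz xy[of i p] assms(2) show ?thesis by auto
  qed
qed

lemma path_y:
  assumes "is_path E (ys j) (ys 0) R" "j \<le> k"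
  shows "set R \<subseteq> ys ` {..j}"
proof -
  interpret m: ncl "\<lambda>a b. E b a" ys xs "\<lambda>v. - f v" k by (rule mirror)
  have "set (rev R) \<subseteq> ys ` {..j}"
    by (rule m.path_x) (use assms is_path_rev[of E] in auto)
  then show ?thesis by simp
qed

lemma ys_notin: "set L \<subseteq> xs ` {..n} \<Longrightarrow> n \<le> k \<Longrightarrow> q \<le> k \<Longrightarrow> ys q \<notin> set L"
proof
  assume "set L \<subseteq> xs ` {..n}" "n \<le> k" "q \<le> k" "ys q \<in> set L"
  then obtain p where "p \<le> n" "ys q = xs p" by auto
  with \<open>n \<le> k\<close> \<open>q \<le> k\<close> show False using xy_ne[of p q] by auto
qed

lemma xs_notin_y: "set R \<subseteq> ys ` {..n} \<Longrightarrow> n \<le> k \<Longrightarrow> q \<le> k \<Longrightarrow> xs q \<notin> set R"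
proof
  assume "set R \<subseteq> ys ` {..n}" "n \<le> k" "q \<le> k" "xs q \<in> set R"
  then obtain p where "p \<le> n" "xs q = ys p" by auto
  with \<open>n \<le> k\<close> \<open>q \<le> k\<close> show False using xy_ne[of q p] by auto
qed

lemma ys_notin_y: "set R \<subseteq> ys ` {..n} \<Longrightarrow> n < q \<Longrightarrow> q \<le> k \<Longrightarrow> ys q \<notin> set R"
proof
  assume "set R \<subseteq> ys ` {..n}" "n < q" "q \<le> k" "ys q \<in> set R"
  then obtain p where "p \<le> n" "ys q = ys p" by auto
  with \<open>n < q\<close> \<open>q \<le> k\<close> show False using y_inj[of q p] by auto
qed

lemma xs_in_x: "set L \<subseteq> xs ` {..n} \<Longrightarrow> n \<le> k \<Longrightarrow> q \<le> k \<Longrightarrow> xs q \<in> set L \<Longrightarrow> q \<le> n"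
proof -
  assume "set L \<subseteq> xs ` {..n}" "n \<le> k" "q \<le> k" "xs q \<in> set L"
  then obtain p where "p \<le> n" "xs q = xs p" by auto
  with \<open>n \<le> k\<close> \<open>q \<le> k\<close> show "q \<le> n" using x_inj[of q p] by auto
qed

lemma M00: "Mtab E xs ys 0 0"
  unfolding Mtab_def by (intro exI[of _ "[xs 0]"] exI[of _ "[ys 0]"]) (auto simp: is_path_def)

lemma Mii: "1 \<le> i \<Longrightarrow> \<not> Mtab E xs ys i i"
  unfolding Mtab_def is_path_def
  by (metis UnI1 UnI2 atLeastAtMost_iff hd_in_set last_in_set max.idem order_refl)

lemma snoc_step:
  assumes L: "is_path E (xs 0) (xs j) L" and "1 \<le> j" "j \<le> k"
  obtains q L' where "q < j" "L = L' @ [xs j]" "is_path E (xs 0) (xs q) L'" "E (xs q) (xs j)"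
proof -
  have "xs 0 \<noteq> xs j" using x_inj assms by auto
  from path_snoc[OF L this] obtain L' where eq: "L = L' @ [xs j]" and ne: "L' \<noteq> []"
    and L': "is_path E (xs 0) (last L') L'" and e: "E (last L') (xs j)" by blast
  have "last L' \<in> set L" using eq ne by simp
  with path_x[OF L \<open>j \<le> k\<close>] obtain q where q: "q \<le> j" "last L' = xs q" by auto
  have "q \<noteq> j" using edge[OF e] q by auto
  with q have "q < j" by simp
  with q eq L' e that show ?thesis by auto
qed

lemma Ma:
  assumes "2 \<le> j" "j \<le> k"
  shows "Mtab E xs ys j (j-1) = (\<exists>i<j-1. Mtab E xs ys i (j-1) \<and> E (xs i) (xs j))"
proof
  assume "Mtab E xs ys j (j-1)"
  then obtain L R where L: "is_path E (xs 0) (xs j) L" and R: "is_path E (ys (j-1)) (ys 0) R"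
    and c: "\<forall>p\<in>{1..max j (j-1)}. (xs p \<in> set L \<union> set R) \<noteq> (ys p \<in> set L \<union> set R)"
    unfolding Mtab_def by blast
  obtain q L' where q: "q < j" and eq: "L = L' @ [xs j]" and L': "is_path E (xs 0) (xs q) L'"
    and e: "E (xs q) (xs j)" using snoc_step[OF L] assms by auto
  have "ys (j-1) \<in> set R" using R hd_in_set[of R] by (auto simp: is_path_def)
  with c assms have "xs (j-1) \<notin> set L" by auto
  moreover have "xs q \<in> set L" using eq L' last_in_set[of L'] by (auto simp: is_path_def)
  ultimately have qj: "q < j - 1" using q by (cases "q = j - 1") auto
  have "Mtab E xs ys q (j-1)" unfolding Mtab_def
  proof (intro exI conjI)
    show "is_path E (xs 0) (xs q) L'" by fact
    show "is_path E (ys (j-1)) (ys 0) R" by fact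
    show "\<forall>p\<in>{1..max q (j-1)}. (xs p \<in> set L' \<union> set R) \<noteq> (ys p \<in> set L' \<union> set R)"
    proof
      fix p assume p: "p \<in> {1..max q (j-1)}"
      then have pj: "p \<le> j - 1" using qj by auto
      have "xs p \<noteq> xs j" "ys p \<noteq> xs j" using x_inj[of p j] xy_ne[of j p] pj assms order.trans[OF pj(1) order.trans[OF diff_le_self assms(2)]] by auto
      then show "(xs p \<in> set L' \<union> set R) \<noteq> (ys p \<in> set L' \<union> set R)"
        using c pj p eq by auto
    qed
  qed
  with qj e show "\<exists>i<j-1. Mtab E xs ys i (j-1) \<and> E (xs i) (xs j)" by blast
next
  assume "\<exists>i<j-1. Mtab E xs ys i (j-1) \<and> E (xs i) (xs j)"
  then obtain i L R where i: "i < j - 1" and e: "E (xs i) (xs j)" and L: "is_path E (xs 0) (xs i) L"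
    and R: "is_path E (ys (j-1)) (ys 0) R"
    and c: "\<forall>p\<in>{1..max i (j-1)}. (xs p \<in> set L \<union> set R) \<noteq> (ys p \<in> set L \<union> set R)"
    unfolding Mtab_def by blast
  have sL: "set L \<subseteq> xs ` {..i}" using path_x[OF L] i assms by auto
  have sR: "set R \<subseteq> ys ` {..j-1}" using path_y[OF R] assms by auto
  show "Mtab E xs ys j (j-1)" unfolding Mtab_def
  proof (intro exI conjI)
    show "is_path E (xs 0) (xs j) (L @ [xs j])" by (rule path_snoc_intro[OF L e])
    show "is_path E (ys (j-1)) (ys 0) R" by fact
    show "\<forall>p\<in>{1..max j (j-1)}. (xs p \<in> set (L @ [xs j]) \<union> set R) \<noteq> (ys p \<in> set (L @ [xs j]) \<union> set R)"
    proof
      fix p assume p: "p \<in> {1..max j (j-1)}"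
      show "(xs p \<in> set (L @ [xs j]) \<union> set R) \<noteq> (ys p \<in> set (L @ [xs j]) \<union> set R)"
      proof (cases "p = j")
        case True
        have ik: "i \<le> k" using i assms by linarith
        have "ys j \<notin> set L" by (rule ys_notin[OF sL ik assms(2)])
        moreover have "ys j \<notin> set R" by (rule ys_notin_y[OF sR _ assms(2)]) (use assms in linarith)
        moreover have "ys j \<noteq> xs j" using xy_ne[of j j] assms by auto
        ultimately show ?thesis using True by auto
      next
        case False
        then have pj: "p \<le> j - 1" "1 \<le> p" using p by auto
        have "xs p \<noteq> xs j" "ys p \<noteq> xs j" using x_inj[of p j] xy_ne[of j p] pj assms order.trans[OF pj(1) order.trans[OF diff_le_self assms(2)]] by auto
        then show ?thesis using c pj i by auto
      qed
    qed
  qed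
qed

lemma Mc:
  assumes "2 \<le> j" "j \<le> k" "i < j - 1"
  shows "Mtab E xs ys j i = (Mtab E xs ys (j-1) i \<and> E (xs (j-1)) (xs j))"
proof
  assume "Mtab E xs ys j i"
  then obtain L R where L: "is_path E (xs 0) (xs j) L" and R: "is_path E (ys i) (ys 0) R"
    and c: "\<forall>p\<in>{1..max j i}. (xs p \<in> set L \<union> set R) \<noteq> (ys p \<in> set L \<union> set R)"
    unfolding Mtab_def by blast
  obtain q L' where q: "q < j" and eq: "L = L' @ [xs j]" and L': "is_path E (xs 0) (xs q) L'"
    and e: "E (xs q) (xs j)" using snoc_step[OF L] assms by auto
  have sR: "set R \<subseteq> ys ` {..i}" using path_y[OF R] assms by auto
  have sL': "set L' \<subseteq> xs ` {..q}" using path_x[OF L'] q assms by auto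
  have "ys (j-1) \<notin> set R" by (rule ys_notin_y[OF sR]) (use assms in linarith)+
  moreover have "ys (j-1) \<notin> set L"
  proof
    assume "ys (j-1) \<in> set L"
    then obtain p where "p \<le> j" "ys (j-1) = xs p" using path_x[OF L assms(2)] by auto
    moreover have "j - 1 \<le> k" using assms by linarith
    ultimately show False using xy_ne[of p "j-1"] assms by auto
  qed
  ultimately have "xs (j-1) \<in> set L \<union> set R" using c assms by auto
  moreover have "xs (j-1) \<notin> set R" by (rule xs_notin_y[OF sR]) (use assms in linarith)+
  moreover have "xs (j-1) \<noteq> xs j" using x_inj assms by auto
  ultimately have xin: "xs (j-1) \<in> set L'" using eq by auto
  have "j - 1 \<le> q" by (rule xs_in_x[OF sL' _ _ xin]) (use assms q in linarith)+
  with q have qj: "q = j - 1" by auto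
  have "Mtab E xs ys (j-1) i" unfolding Mtab_def
  proof (intro exI conjI)
    show "is_path E (xs 0) (xs (j-1)) L'" using L' qj by simp
    show "is_path E (ys i) (ys 0) R" by fact
    show "\<forall>p\<in>{1..max (j-1) i}. (xs p \<in> set L' \<union> set R) \<noteq> (ys p \<in> set L' \<union> set R)"
    proof
      fix p assume p: "p \<in> {1..max (j-1) i}"
      then have pj: "p \<le> j - 1" using assms by auto
      have "xs p \<noteq> xs j" "ys p \<noteq> xs j" using x_inj[of p j] xy_ne[of j p] pj assms order.trans[OF pj(1) order.trans[OF diff_le_self assms(2)]] by auto
      then show "(xs p \<in> set L' \<union> set R) \<noteq> (ys p \<in> set L' \<union> set R)"
        using c pj p eq by auto
    qed
  qed
  with qj e show "Mtab E xs ys (j-1) i \<and> E (xs (j-1)) (xs j)" by simp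
next
  assume "Mtab E xs ys (j-1) i \<and> E (xs (j-1)) (xs j)"
  then obtain L R where e: "E (xs (j-1)) (xs j)" and L: "is_path E (xs 0) (xs (j-1)) L"
    and R: "is_path E (ys i) (ys 0) R"
    and c: "\<forall>p\<in>{1..max (j-1) i}. (xs p \<in> set L \<union> set R) \<noteq> (ys p \<in> set L \<union> set R)"
    unfolding Mtab_def by blast
  have sL: "set L \<subseteq> xs ` {..j-1}" using path_x[OF L] assms by auto
  have sR: "set R \<subseteq> ys ` {..i}" using path_y[OF R] assms by auto
  show "Mtab E xs ys j i" unfolding Mtab_def
  proof (intro exI conjI)
    show "is_path E (xs 0) (xs j) (L @ [xs j])" by (rule path_snoc_intro[OF L e])
    show "is_path E (ys i) (ys 0) R" by fact
    show "\<forall>p\<in>{1..max j i}. (xs p \<in> set (L @ [xs j]) \<union> set R) \<noteq> (ys p \<in> set (L @ [xs j]) \<union> set R)"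
    proof
      fix p assume p: "p \<in> {1..max j i}"
      show "(xs p \<in> set (L @ [xs j]) \<union> set R) \<noteq> (ys p \<in> set (L @ [xs j]) \<union> set R)"
      proof (cases "p = j")
        case True
        have jk: "j - 1 \<le> k" using assms by linarith
        have "ys j \<notin> set L" by (rule ys_notin[OF sL jk assms(2)])
        moreover have "ys j \<notin> set R" by (rule ys_notin_y[OF sR _ assms(2)]) (use assms in linarith)
        moreover have "ys j \<noteq> xs j" using xy_ne[of j j] assms by auto
        ultimately show ?thesis using True by auto
      next
        case False
        then have pj: "p \<le> j - 1" "1 \<le> p" using p assms by auto
        have "xs p \<noteq> xs j" "ys p \<noteq> xs j" using x_inj[of p j] xy_ne[of j p] pj assms order.trans[OF pj(1) order.trans[OF diff_le_self assms(2)]] by auto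
        then show ?thesis using c pj assms by auto
      qed
    qed
  qed
qed

lemma M10:
  assumes "1 \<le> k"
  shows "Mtab E xs ys 1 0 = E (xs 0) (xs 1)"
proof
  assume "Mtab E xs ys 1 0"
  then obtain L where L: "is_path E (xs 0) (xs 1) L" unfolding Mtab_def by blast
  obtain q L' where "q < 1" "E (xs q) (xs 1)" using snoc_step[OF L] assms by auto
  then show "E (xs 0) (xs 1)" by simp
next
  assume e: "E (xs 0) (xs 1)"
  have "ys 1 \<noteq> xs 0" "ys 1 \<noteq> xs 1" "ys 1 \<noteq> ys 0" using xy_ne[of 0 1] xy_ne[of 1 1] y_inj[of 1 0] assms by auto
  moreover have "xs 0 \<noteq> ys 0" "xs 1 \<noteq> ys 0" using xy_ne[of 0 0] xy_ne[of 1 0] assms by auto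
  ultimately show "Mtab E xs ys 1 0" unfolding Mtab_def using e
    by (intro exI[of _ "[xs 0, xs 1]"] exI[of _ "[ys 0]"]) (auto simp: is_path_def)
qed


lemma M01:
  assumes "1 \<le> k"
  shows "Mtab E xs ys 0 1 = E (ys 1) (ys 0)"
proof -
  interpret m: ncl "\<lambda>a b. E b a" ys xs "\<lambda>v. - f v" k by (rule mirror)
  show ?thesis using m.M10[OF assms] Mtab_mirror[of E xs ys 0 1] by simp
qed

lemma Mb:
  assumes "2 \<le> j" "j \<le> k" "i < j - 1"
  shows "Mtab E xs ys i j = (Mtab E xs ys i (j-1) \<and> E (ys j) (ys (j-1)))"
proof -
  interpret m: ncl "\<lambda>a b. E b a" ys xs "\<lambda>v. - f v" k by (rule mirror)
  show ?thesis using m.Mc[OF assms] Mtab_mirror[of E xs ys i j] Mtab_mirror[of E xs ys i "j-1"] by simp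
qed

lemma Md:
  assumes "2 \<le> j" "j \<le> k"
  shows "Mtab E xs ys (j-1) j = (\<exists>i<j-1. Mtab E xs ys (j-1) i \<and> E (ys j) (ys i))"
proof -
  interpret m: ncl "\<lambda>a b. E b a" ys xs "\<lambda>v. - f v" k by (rule mirror)
  have e: "\<And>i. Mtab E xs ys (j-1) i = Mtab (\<lambda>a b. E b a) ys xs i (j-1)"
    by (rule Mtab_mirror)
  have "(\<exists>i<j-1. Mtab E xs ys (j-1) i \<and> E (ys j) (ys i)) = (\<exists>i<j-1. Mtab (\<lambda>a b. E b a) ys xs i (j-1) \<and> E (ys j) (ys i))"
    by (simp only: e)
  then show ?thesis using m.Ma[OF assms] Mtab_mirror[of E xs ys "j-1" j] by simp
qed

definition Inv :: "nat \<Rightarrow> (nat \<Rightarrow> nat \<Rightarrow> bool) \<Rightarrow> bool" where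
  "Inv J T \<longleftrightarrow> (\<forall>x\<le>k. \<forall>y\<le>k. T x y = (max x y \<le> J \<and> Mtab E xs ys x y))"

definition G :: "nat \<Rightarrow> nat \<Rightarrow> nat \<Rightarrow> nat \<Rightarrow> bool" where
  "G j m x y = (if max x y < j then Mtab E xs ys x y
     else if j < max x y then False
     else if x = j \<and> y = j then False
     else if x < j - 1 then (x < m \<and> Mtab E xs ys x j)
     else if y < j - 1 then (y < m \<and> Mtab E xs ys j y)
     else if x = j then (\<exists>i<m. Mtab E xs ys i (j-1) \<and> E (xs i) (xs j))
     else (\<exists>i<m. Mtab E xs ys (j-1) i \<and> E (ys j) (ys i)))"

definition Inn :: "nat \<Rightarrow> nat \<Rightarrow> (nat \<Rightarrow> nat \<Rightarrow> bool) \<Rightarrow> bool" where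
  "Inn j m T \<longleftrightarrow> (\<forall>x\<le>k. \<forall>y\<le>k. T x y = G j m x y)"

end

lemma inner_fst:
  assumes "i < j - 1"
  shows "fst (inner_step E xs ys j i (T, c)) x y =
    (T x y \<or> (x = j \<and> y = j-1 \<and> T i (j-1) \<and> E (xs i) (xs j))
      \<or> (x = i \<and> y = j \<and> T i (j-1) \<and> E (ys j) (ys (j-1)))
      \<or> (x = j \<and> y = i \<and> T (j-1) i \<and> E (xs (j-1)) (xs j))
      \<or> (x = j-1 \<and> y = j \<and> T (j-1) i \<and> E (ys j) (ys i)))"
proof -
  have d: "i \<noteq> j" "i \<noteq> j - 1" "j \<noteq> j - 1" using assms by auto
  show ?thesis unfolding inner_step_def Let_def set1_def
    using d by (simp split: if_split) blast
qed

lemma inner_snd: "snd (inner_step E xs ys j i st) = snd st + 12"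
  by (cases st) (simp add: inner_step_def Let_def)

lemma inner_fold_snd: "snd (fold (inner_step E xs ys j) is st) = snd st + 12 * length is"
  by (induction "is" arbitrary: st) (auto simp: inner_snd)

lemma outer_snd: "snd (outer_step E xs ys j st) = snd st + 1 + 12 * (j - 1)"
  by (cases st) (simp add: outer_step_def inner_fold_snd)

lemma outer_fold_snd:
  "\<forall>j\<in>set js. j \<le> K \<Longrightarrow> snd (fold (outer_step E xs ys) js st) \<le> snd st + length js * (1 + 12 * K)"
proof (induction js arbitrary: st)
  case Nil then show ?case by simp
next
  case (Cons j js)
  have "snd (fold (outer_step E xs ys) (j # js) st) = snd (fold (outer_step E xs ys) js (outer_step E xs ys j st))"
    by simp
  also have "\<dots> \<le> snd (outer_step E xs ys j st) + length js * (1 + 12 * K)"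
    using Cons by auto
  also have "\<dots> \<le> snd st + length (j # js) * (1 + 12 * K)"
  proof -
    have "j - 1 \<le> K" using Cons.prems by auto
    then have "12 * (j - 1) \<le> 12 * K" by simp
    then show ?thesis by (simp add: outer_snd)
  qed
  finally show ?case .
qed


context ncl begin

lemma Inn_init: "2 \<le> j \<Longrightarrow> Inv (j-1) T \<Longrightarrow> Inn j 0 T"
  unfolding Inv_def Inn_def G_def by auto

lemma Inn_step:
  assumes j: "2 \<le> j" "j \<le> k" and m: "m < j - 1" and I: "Inn j m T"
  shows "Inn j (Suc m) (fst (inner_step E xs ys j m (T, c)))"
  unfolding Inn_def
proof (intro allI impI)
  fix x y assume xy: "x \<le> k" "y \<le> k"
  have mk: "m \<le> k" "j - 1 \<le> k" using j m by auto
  have t1: "T m (j-1) = Mtab E xs ys m (j-1)" using I mk m unfolding Inn_def G_def by auto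
  have t2: "T (j-1) m = Mtab E xs ys (j-1) m" using I mk m unfolding Inn_def G_def by auto
  have tx: "T x y = G j m x y" using I xy unfolding Inn_def by auto
  have b: "Mtab E xs ys m j = (Mtab E xs ys m (j-1) \<and> E (ys j) (ys (j-1)))" by (rule Mb[OF j m])
  have cc: "Mtab E xs ys j m = (Mtab E xs ys (j-1) m \<and> E (xs (j-1)) (xs j))" by (rule Mc[OF j m])
  show "fst (inner_step E xs ys j m (T, c)) x y = G j (Suc m) x y"
    unfolding inner_fst[OF m] t1 t2 tx
    using j m b cc unfolding G_def by (auto simp: less_Suc_eq)
qed

lemma Inn_fold:
  assumes j: "2 \<le> j" "j \<le> k" and I: "Inn j 0 T"
  shows "m \<le> j - 1 \<Longrightarrow> Inn j m (fst (fold (inner_step E xs ys j) [0..<m] (T, c)))"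
proof (induction m)
  case 0 then show ?case using I by simp
next
  case (Suc m)
  let ?st = "fold (inner_step E xs ys j) [0..<m] (T, c)"
  have mm: "m < j - 1" using Suc.prems by simp
  have "Inn j m (fst ?st)" using Suc.IH Suc.prems by simp
  then have "Inn j (Suc m) (fst (inner_step E xs ys j m (fst ?st, snd ?st)))"
    by (rule Inn_step[OF j mm])
  then show ?case by simp
qed

lemma Inn_final:
  assumes j: "2 \<le> j" "j \<le> k" and I: "Inn j (j-1) T"
  shows "Inv j T"
  unfolding Inv_def
proof (intro allI impI)
  fix x y assume xy: "x \<le> k" "y \<le> k"
  have tx: "T x y = G j (j-1) x y" using I xy unfolding Inn_def by auto
  have "G j (j-1) x y = (max x y \<le> j \<and> Mtab E xs ys x y)"
  proof -
    consider (a) "max x y < j" | (b) "j < max x y" | (c) "max x y = j" by linarith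
    then show ?thesis
    proof cases
      case a then show ?thesis by (simp add: G_def)
    next
      case b then have e1: "(max x y < j) = False" "(j < max x y) = True" "(max x y \<le> j) = False" by auto
      show ?thesis by (simp only: G_def e1 if_True if_False simp_thms)
    next
      case c
      then consider (c1) "x = j" "y = j" | (c2) "x < j - 1" "y = j" | (c3) "x = j - 1" "y = j"
        | (c4) "x = j" "y < j - 1" | (c5) "x = j" "y = j - 1" by linarith
      then show ?thesis
      proof cases
        case c1 then show ?thesis using Mii[of j] j by (simp add: G_def)
      next
        case c2 then have "x \<noteq> j" by linarith
        with c2 show ?thesis by (simp add: G_def)
      next
        case c3
        have "G j (j-1) x y = (\<exists>i<j-1. Mtab E xs ys (j-1) i \<and> E (ys j) (ys i))"
        proof -
          have e: "(max x y < j) = False" "(j < max x y) = False" "(x = j \<and> y = j) = False"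
            "(x < j - 1) = False" "(y < j - 1) = False" "(x = j) = False" using c3 j by auto
          show ?thesis by (simp only: G_def e if_False simp_thms)
        qed
        then show ?thesis using Md[OF j] c3 by simp
      next
        case c4
        have e: "(max x y < j) = False" "(j < max x y) = False" "(x = j \<and> y = j) = False"
            "(x < j - 1) = False" "(y < j - 1) = True" "(max x y \<le> j) = True" using c4 j by auto
        have "G j (j-1) x y = Mtab E xs ys j y" by (simp only: G_def e if_False if_True simp_thms)
        then show ?thesis using c4 j by simp
      next
        case c5
        have "G j (j-1) x y = (\<exists>i<j-1. Mtab E xs ys i (j-1) \<and> E (xs i) (xs j))"
        proof -
          have e: "(max x y < j) = False" "(j < max x y) = False" "(x = j \<and> y = j) = False"
            "(x < j - 1) = False" "(y < j - 1) = False" "(x = j) = True" "(y = j) = False" using c5 j by auto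
          show ?thesis by (simp only: G_def e if_False if_True simp_thms)
        qed
        then show ?thesis using Ma[OF j] c5 by simp
      qed
    qed
  qed
  then show "T x y = (max x y \<le> j \<and> Mtab E xs ys x y)" using tx by simp
qed

lemma outer_inv:
  assumes j: "2 \<le> j" "j \<le> k" and I: "Inv (j-1) T"
  shows "Inv j (fst (outer_step E xs ys j (T, c)))"
proof -
  have "Inn j (j-1) (fst (fold (inner_step E xs ys j) [0..<j-1] (T, c + 1)))"
    by (rule Inn_fold[OF j Inn_init[OF j(1) I]]) simp
  then show ?thesis unfolding outer_step_def using Inn_final[OF j] by simp
qed

lemma fold_inv:
  assumes I: "Inv 1 T"
  shows "1 \<le> J \<Longrightarrow> J \<le> k \<Longrightarrow> Inv J (fst (fold (outer_step E xs ys) [2..<Suc J] (T, c)))"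
proof (induction J)
  case 0 then show ?case by simp
next
  case (Suc J)
  show ?case
  proof (cases "J = 0")
    case True then show ?thesis using I by simp
  next
    case False
    let ?st = "fold (outer_step E xs ys) [2..<Suc J] (T, c)"
    have IH: "Inv J (fst ?st)" using Suc False by simp
    have "Inv (Suc J) (fst (outer_step E xs ys (Suc J) (fst ?st, snd ?st)))"
      by (rule outer_inv) (use Suc.prems False IH in auto)
    moreover have eq: "[2..<Suc (Suc J)] = [2..<Suc J] @ [Suc J]" using False by simp
    moreover have "fold (outer_step E xs ys) ([2..<Suc J] @ [Suc J]) (T, c) = outer_step E xs ys (Suc J) ?st"
      by (simp only: fold_append o_apply fold_Cons fold_Nil id_apply)
    ultimately show ?thesis by (simp del: upt_Suc)
  qed
qed

lemma compute_correct:
  "\<forall>i\<le>k. \<forall>j\<le>k. fst (compute_M E xs ys k) i j = Mtab E xs ys i j"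
proof (cases "k = 0")
  case True
  then show ?thesis using M00 by (simp add: compute_M_def)
next
  case False
  then have k1: "1 \<le> k" by simp
  define M3 :: "nat \<Rightarrow> nat \<Rightarrow> bool" where "M3 = (let M1 = (\<lambda>i j. i = 0 \<and> j = 0); M2 = (M1(1 := (M1 1)(0 := E (xs 0) (xs 1))))
       in M2(0 := (M2 0)(1 := E (ys 1) (ys 0))))"
  have cm: "compute_M E xs ys k = fold (outer_step E xs ys) [2..<Suc k] (M3, (Suc k)^2 + 4)"
    by (simp add: compute_M_def M3_def Let_def)
  have "Inv 1 M3" unfolding Inv_def
  proof (intro allI impI)
    fix x y assume "x \<le> k" "y \<le> k"
    show "M3 x y = (max x y \<le> 1 \<and> Mtab E xs ys x y)"
      using M00 M10[OF k1] M01[OF k1] Mii[of 1]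
      by (cases "x = 0"; cases "x = 1"; cases "y = 0"; cases "y = 1") (auto simp: M3_def)
  qed
  then have "Inv k (fst (fold (outer_step E xs ys) [2..<Suc k] (M3, (Suc k)^2 + 4)))"
    by (rule fold_inv[OF _ k1 order.refl])
  then have "Inv k (fst (compute_M E xs ys k))" unfolding cm .
  then show ?thesis unfolding Inv_def by auto
qed

end


lemma card_ncV: "card (ncV k) = 2 * k + 2"
proof -
  have "ncV k = N ` {..k} \<union> C ` {..k}" by (auto simp: ncV_def)
  moreover have "N ` {..k} \<inter> C ` {..k} = {}" by auto
  moreover have "card (N ` {..k}) = Suc k" by (simp add: card_image inj_on_def)
  moreover have "card (C ` {..k}) = Suc k" by (simp add: card_image inj_on_def)
  ultimately show ?thesis by (simp add: card_Un_disjoint)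
qed

lemma listing_ncl:
  assumes "NC_listing R W w k xs ys"
  shows "ncl (ncE R W w k) xs ys (cord W w) k"
proof -
  let ?P = "\<lambda>u v. cord W w u < cord W w v"
  let ?LX = "map xs [0..<Suc k]" and ?LY = "map ys [0..<Suc k]"
  have setL: "set (?LX @ rev ?LY) = ncV k" and sw: "sorted_wrt ?P (?LX @ rev ?LY)"
    using assms unfolding NC_listing_def by auto
  have s1: "set ?LX = xs ` {..k}" "set (rev ?LY) = ys ` {..k}"
    by (simp_all only: set_rev set_map set_upt atLeast0LessThan lessThan_Suc_atMost)
  have V: "ncV k = xs ` {..k} \<union> ys ` {..k}"
    using setL by (simp only: set_append s1)
  have sx: "sorted_wrt ?P ?LX" and sy: "sorted_wrt ?P (rev ?LY)"
    and cross: "\<forall>x\<in>set ?LX. \<forall>y\<in>set (rev ?LY). ?P x y"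
    using sw by (auto simp: sorted_wrt_append)
  have sy': "sorted_wrt (\<lambda>u v. ?P v u) ?LY" using sy by (simp only: sorted_wrt_rev)
  show ?thesis
  proof
    fix u v assume "ncE R W w k u v"
    then show "u \<in> xs ` {..k} \<union> ys ` {..k} \<and> v \<in> xs ` {..k} \<union> ys ` {..k} \<and> cord W w u < cord W w v"
      unfolding ncE_def V by auto
  next
    fix p q :: nat assume "p < q" "q \<le> k"
    then have pq: "p < q" "q < length ?LX" by simp_all
    have "?P (?LX ! p) (?LX ! q)" using sx pq unfolding sorted_wrt_iff_nth_less by blast
    moreover have "?LX ! p = xs p" "?LX ! q = xs q" using pq by (simp_all del: upt_Suc)
    ultimately show "cord W w (xs p) < cord W w (xs q)" by simp
  next
    fix p q :: nat assume "p < q" "q \<le> k"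
    then have pq: "p < q" "q < length ?LY" by simp_all
    have "?P (?LY ! q) (?LY ! p)" using sy' pq unfolding sorted_wrt_iff_nth_less by blast
    moreover have "?LY ! p = ys p" "?LY ! q = ys q" using pq by (simp_all del: upt_Suc)
    ultimately show "cord W w (ys q) < cord W w (ys p)" by simp
  next
    show "cord W w (xs k) < cord W w (ys k)" using cross by auto
  qed
qed

theorem lemma2:
  shows "\<exists>c::nat. \<forall>(R::real set) (W::real) (w::nat \<Rightarrow> real) (k::nat) xs ys.
    NC_listing R W w k xs ys \<longrightarrow>
      (let E = ncE R W w k; res = compute_M E xs ys k in
        (\<forall>i\<le>k. \<forall>j\<le>k. fst res i j = Mtab E xs ys i j) \<and>
        snd res \<le> c * (card (ncV k))^2)"
proof (intro exI[of _ 5] allI impI)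
  fix R W w k xs ys
  assume a: "NC_listing R W w k xs ys"
  let ?E = "ncE R W w k"
  interpret ncl ?E xs ys "cord W w" k by (rule listing_ncl[OF a])
  have cost: "snd (compute_M ?E xs ys k) \<le> ((Suc k)^2 + 4) + length [2..<Suc k] * (1 + 12 * k)"
    unfolding compute_M_def Let_def
    by (rule order.trans[OF outer_fold_snd]) auto
  have "length [2..<Suc k] \<le> k" by (simp only: length_upt)
  then have "((Suc k)^2 + 4) + length [2..<Suc k] * (1 + 12 * k) \<le> ((Suc k)^2 + 4) + k * (1 + 12 * k)"
    by (intro add_left_mono mult_le_mono1)
  also have "\<dots> \<le> 5 * (2 * k + 2)^2"
    by (simp add: power2_eq_square algebra_simps)
  finally have "((Suc k)^2 + 4) + length [2..<Suc k] * (1 + 12 * k) \<le> 5 * (2 * k + 2)^2" .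
  with cost have "snd (compute_M ?E xs ys k) \<le> 5 * (card (ncV k))^2" by (simp add: card_ncV)
  then show "let E = ?E; res = compute_M E xs ys k in
        (\<forall>i\<le>k. \<forall>j\<le>k. fst res i j = Mtab E xs ys i j) \<and> snd res \<le> 5 * (card (ncV k))^2"
    using compute_correct by (simp add: Let_def)
qed

end
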